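(* Let $\sigma_X>0$, $R>0$, $R_c\ge0$, $P\ge0$, and write $a:=\sqrt{1-e^{-2R}}$, $b:=\sqrt{1-e^{-2(R+R_c)}}$, $e:=e^{-2(R+R_c)}$. Define $$\varsigma(R,R_c):=\frac{\sigma_X\big(\sqrt{b^2+4a^2e}-b\big)}{2ae},\qquad \varsigma'(R,R_c):=\frac{\sqrt{1+4\beta_1\beta_2'}-1}{2\beta_1},$$ with $\beta_1=\frac{ae}{\sigma_X b}$ and $\beta_2'=\sigma_X a\big(1+\frac{e}{b}\big)$, and let $\sigma(R,R_c,P):=\frac{\sqrt{1+4\beta_1\beta_2}-1}{2\beta_1}$ with $\beta_2=\sigma_X\sqrt{(1-e^{-2R})(1-e^{-2(R+R_c+P)})}+\frac{\sigma_X a e}{b}$. Then $$\varsigma(R,R_c)\le\sigma(R,R_c,P)\le\varsigma'(R,R_c)<\sigma_X.$$ Moreover, if $\underline D(R,R_c,P|\mathcal N(\mu_X,\sigma_X^2))=\sigma_X^2+\sigma^2(P)-2\sigma_X\sigma(P)\xi(R,R_c)$, then $\sigma(P)\ge\varsigma(R,R_c)$.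
   Context: All logarithms are natural. $\xi(R,R_c):=\sqrt{(1-e^{-2R})(1-e^{-2(R+R_c)})}$. For $\sigma\in(0,\sigma_X]$, $\psi(\sigma):=\log\frac{\sigma_X}{\sigma}+\frac{\sigma^2-\sigma_X^2}{2\sigma_X^2}$ (strictly decreasing, $\to\infty$ as $\sigma\to0$, $\psi(\sigma_X)=0$), and $\sigma(P)$ is the unique $\sigma\in(0,\sigma_X]$ with $\psi(\sigma)=P$. $\underline D(R,R_c,P|\mathcal N(\mu_X,\sigma_X^2)):=\min_{\sigma_{\hat X}\in[\sigma(P),\sigma_X]}\big(\sigma_X^2+\sigma_{\hat X}^2-2\sigma_X\sigma_{\hat X}\sqrt{(1-e^{-2R})(1-e^{-2(R+R_c+P-\psi(\sigma_{\hat X}))})}\big)$. *)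

theory Defs
  imports Complex_Main
begin

definition xi :: "real \<Rightarrow> real \<Rightarrow> real" where
  "xi R Rc = sqrt ((1 - exp (-2*R)) * (1 - exp (-2*(R+Rc))))"

definition psi :: "real \<Rightarrow> real \<Rightarrow> real" where
  "psi \<sigma>X \<sigma> = ln (\<sigma>X / \<sigma>) + (\<sigma>^2 - \<sigma>X^2) / (2*\<sigma>X^2)"

definition sigmaP :: "real \<Rightarrow> real \<Rightarrow> real" where
  "sigmaP \<sigma>X P = (THE \<sigma>. 0 < \<sigma> \<and> \<sigma> \<le> \<sigma>X \<and> psi \<sigma>X \<sigma> = P)"

text \<open>Lower bound D(R,Rc,P | N(mu_X, sigma_X^2)); it does not depend on mu_X.
  The minimum over the compact interval is written as an infimum.\<close>
definition Dlow :: "real \<Rightarrow> real \<Rightarrow> real \<Rightarrow> real \<Rightarrow> real" where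
  "Dlow \<sigma>X R Rc P = Inf ((\<lambda>s. \<sigma>X^2 + s^2 - 2*\<sigma>X*s*
      sqrt ((1 - exp (-2*R)) * (1 - exp (-2*(R + Rc + P - psi \<sigma>X s)))))
      ` {sigmaP \<sigma>X P .. \<sigma>X})"

end

theory Submission
  imports Defs
begin


lemma psi_dec:
  fixes \<sigma> s t :: real
  assumes "0 < s" "s < t" "t \<le> \<sigma>"
  shows "psi \<sigma> t < psi \<sigma> s"
proof -
  have st: "ln (s/t) \<le> s/t - 1" using assms by (intro ln_le_minus_one) simp
  have "ln (s/t) = ln s - ln t" using assms by (simp add: ln_div)
  moreover have "ln (\<sigma>/t) = ln \<sigma> - ln t" "ln (\<sigma>/s) = ln \<sigma> - ln s" using assms by (simp_all add: ln_div)
  moreover have "(t^2 - s^2)/(2*\<sigma>^2) < (t - s)/t"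
  proof -
    have "t*(t+s) < 2*\<sigma>^2"
    proof -
      have "t*(t+s) < 2*t^2" using assms by (simp add: power2_eq_square algebra_simps)
      also have "\<dots> \<le> 2*\<sigma>^2" using assms by (intro mult_left_mono power_mono) auto
      finally show ?thesis .
    qed
    hence "(t-s)*(t*(t+s)) < (t-s)*(2*\<sigma>^2)" using assms by (intro mult_strict_left_mono) auto
    thus ?thesis using assms by (simp add: field_simps power2_eq_square)
  qed
  moreover have "s/t - 1 = -((t-s)/t)" using assms by (simp add: field_simps)
  moreover have "(t^2 - \<sigma>^2)/(2*\<sigma>^2) - (s^2 - \<sigma>^2)/(2*\<sigma>^2) = (t^2 - s^2)/(2*\<sigma>^2)"
    by (simp add: diff_divide_distrib)
  ultimately show ?thesis unfolding psi_def using st by linarith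
qed

lemma psi_self: "\<sigma> > 0 \<Longrightarrow> psi \<sigma> \<sigma> = 0"
  unfolding psi_def by simp

lemma sigmaP_props:
  fixes \<sigma> P :: real
  assumes "\<sigma> > 0" "P \<ge> 0"
  shows "0 < sigmaP \<sigma> P \<and> sigmaP \<sigma> P \<le> \<sigma> \<and> psi \<sigma> (sigmaP \<sigma> P) = P"
proof -
  define s0 where "s0 = \<sigma> * exp (-(P+1))"
  have s0: "0 < s0" "s0 \<le> \<sigma>" using assms unfolding s0_def by (auto simp: mult_le_cancel_left1)
  have ee: "exp (-(P+1)) * exp (P+1) = 1" by (simp add: exp_add[symmetric])
  have "\<sigma>/s0 = exp (P+1)" using assms ee unfolding s0_def by (simp add: field_simps)
  hence "ln (\<sigma>/s0) = P + 1" by simp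
  moreover have "(s0^2 - \<sigma>^2)/(2*\<sigma>^2) \<ge> -1/2"
  proof -
    have "s0^2 \<ge> 0" by simp
    thus ?thesis using assms by (simp add: field_simps)
  qed
  ultimately have ps0: "psi \<sigma> s0 \<ge> P" unfolding psi_def by linarith
  have "\<exists>x. s0 \<le> x \<and> x \<le> \<sigma> \<and> psi \<sigma> x = P"
  proof (rule IVT2)
    show "psi \<sigma> \<sigma> \<le> P" using assms psi_self by simp
    show "P \<le> psi \<sigma> s0" by fact
    show "s0 \<le> \<sigma>" by fact
    show "\<forall>x. s0 \<le> x \<and> x \<le> \<sigma> \<longrightarrow> isCont (psi \<sigma>) x"
      using s0 assms unfolding psi_def[abs_def] by (auto intro!: continuous_intros)
  qed
  then obtain x where x0: "s0 \<le> x" "x \<le> \<sigma>" "psi \<sigma> x = P" by blast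
  hence x: "0 < x" "x \<le> \<sigma>" "psi \<sigma> x = P" using s0 by auto
  have uniq: "y = x" if "0 < y \<and> y \<le> \<sigma> \<and> psi \<sigma> y = P" for y
  proof (rule ccontr)
    assume "y \<noteq> x"
    hence "y < x \<or> x < y" by auto
    thus False
    proof
      assume "y < x" thus False using psi_dec[of y x \<sigma>] that x by simp
    next
      assume "x < y" thus False using psi_dec[of x y \<sigma>] that x by simp
    qed
  qed
  have "sigmaP \<sigma> P = x" unfolding sigmaP_def
  proof (rule the_equality)
    show "0 < x \<and> x \<le> \<sigma> \<and> psi \<sigma> x = P" using x by simp
  qed (rule uniq)
  thus ?thesis using x by simp
qed



lemma aux1: "(x::real) * (inverse c / 2 * y) = x * y / (2 * c)"
  by (cases "c = 0") (simp_all add: field_simps)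

lemma deriv_f_aux:
  fixes h :: "real \<Rightarrow> real"
  assumes "DERIV h x :> Dh"
  shows "DERIV (\<lambda>s. c^2 + s^2 - 2*c*s*h s) x :> 2*x - 2*c*(h x + x*Dh)"
  by (rule derivative_eq_intros assms refl)+ (simp add: algebra_simps)

lemma deriv_f:
  fixes sP \<sigma>X R Rc P E e :: real
  assumes "0 < sP" "0 < \<sigma>X" "psi \<sigma>X sP = P" "E = exp (-2*R)" "e = exp (-2*(R+Rc))" "0 < (1-E)*(1-e)"
  shows "DERIV (\<lambda>s. \<sigma>X^2 + s^2 - 2*\<sigma>X*s*sqrt((1-exp(-2*R))*(1-exp(-2*(R+Rc+P-psi \<sigma>X s))))) sP :>
    2*sP - 2*\<sigma>X*(sqrt((1-E)*(1-e)) + sP * (-(1-E)*2*e*(-1/sP + sP/\<sigma>X^2)) / (2*sqrt((1-E)*(1-e))))"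
proof -
  have ex: "exp (-2*(R+Rc+P-psi \<sigma>X sP)) = e" using assms by simp
  have dpsi: "DERIV (psi \<sigma>X) sP :> (-1/sP + sP/\<sigma>X^2)"
    unfolding psi_def[abs_def] using assms(1,2)
    by (auto intro!: derivative_eq_intros simp: field_simps power2_eq_square)
  have dg: "DERIV (\<lambda>s. (1-exp(-2*R))*(1-exp(-2*(R+Rc+P-psi \<sigma>X s)))) sP :> (-(1-E)*2*e*(-1/sP + sP/\<sigma>X^2))"
  proof -
    have arg: "2*psi \<sigma>X sP - (2*R+2*Rc+2*P) = -2*(R+Rc)" using assms(3) by simp
    have ex2: "exp (2*psi \<sigma>X sP - (2*R+2*Rc+2*P)) = e" unfolding arg assms(5) ..
    show ?thesis by (rule derivative_eq_intros dpsi refl)+ (use assms(1,2) in \<open>simp add: assms(3,4,5) field_simps\<close>)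
  qed
  have g0: "(1-exp(-2*R))*(1-exp(-2*(R+Rc+P-psi \<sigma>X sP))) = (1-E)*(1-e)" using ex assms by simp
  have dsq: "DERIV (\<lambda>s. sqrt ((1-exp(-2*R))*(1-exp(-2*(R+Rc+P-psi \<sigma>X s))))) sP :>
      inverse (sqrt ((1-E)*(1-e))) / 2 * (-(1-E)*2*e*(-1/sP + sP/\<sigma>X^2))"
    using DERIV_chain2[OF DERIV_real_sqrt dg] g0 assms(6) by simp
  have d: "DERIV (\<lambda>s. \<sigma>X^2 + s^2 - 2*\<sigma>X*s*sqrt((1-exp(-2*R))*(1-exp(-2*(R+Rc+P-psi \<sigma>X s))))) sP :>
    2*sP - 2*\<sigma>X*(sqrt((1-E)*(1-e)) + sP*(inverse (sqrt ((1-E)*(1-e))) / 2 * (-(1-E)*2*e*(-1/sP + sP/\<sigma>X^2))))"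
    using deriv_f_aux[OF dsq, of \<sigma>X] unfolding g0 .
  show ?thesis using d unfolding aux1 .
qed

lemma root_mono:
  fixes b1 x y :: real
  assumes "b1 > 0" "x \<le> y"
  shows "(sqrt (1 + 4*b1*x) - 1) / (2*b1) \<le> (sqrt (1 + 4*b1*y) - 1) / (2*b1)"
proof -
  have "sqrt (1 + 4*b1*x) \<le> sqrt (1 + 4*b1*y)" using assms by (intro real_sqrt_le_mono) auto
  thus ?thesis using assms by (intro divide_right_mono) auto
qed

theorem mainTheorem6:
  fixes \<sigma>X R Rc P :: real
  assumes "\<sigma>X > 0" "R > 0" "Rc \<ge> 0" "P \<ge> 0"
  defines "a \<equiv> sqrt (1 - exp (-2*R))"
      and "b \<equiv> sqrt (1 - exp (-2*(R+Rc)))"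
      and "e \<equiv> exp (-2*(R+Rc))"
  defines "\<beta>1 \<equiv> a*e / (\<sigma>X*b)"
      and "\<beta>2' \<equiv> \<sigma>X*a*(1 + e/b)"
      and "\<beta>2 \<equiv> \<sigma>X * sqrt ((1 - exp (-2*R)) * (1 - exp (-2*(R+Rc+P)))) + \<sigma>X*a*e/b"
  defines "vs \<equiv> \<sigma>X * (sqrt (b^2 + 4*a^2*e) - b) / (2*a*e)"
      and "vs' \<equiv> (sqrt (1 + 4*\<beta>1*\<beta>2') - 1) / (2*\<beta>1)"
      and "sig \<equiv> (sqrt (1 + 4*\<beta>1*\<beta>2) - 1) / (2*\<beta>1)"
  shows "vs \<le> sig \<and> sig \<le> vs' \<and> vs' < \<sigma>X \<and>
    (Dlow \<sigma>X R Rc P = \<sigma>X^2 + (sigmaP \<sigma>X P)^2 - 2*\<sigma>X*(sigmaP \<sigma>X P)*xi R Rc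
       \<longrightarrow> sigmaP \<sigma>X P \<ge> vs)"
proof -
  define E where "E = exp (-2*R)"
  define e' where "e' = exp (-2*(R+Rc+P))"
  have E: "0 < E" "E < 1" using assms(1-4) unfolding E_def by auto
  have e: "0 < e" "e \<le> E" using assms(1-4) unfolding e_def E_def by auto
  have e': "0 < e'" "e' \<le> e" using assms(1-4) unfolding e_def e'_def by auto
  have a: "0 < a" "a < 1" "a^2 = 1 - E" using E unfolding a_def E_def by auto
  have b0: "b = sqrt (1 - e)" unfolding b_def e_def by simp
  have a0: "a = sqrt (1 - E)" unfolding a_def E_def by simp
  have b: "0 < b" "b < 1" "b^2 = 1 - e" "a \<le> b" using E e unfolding a0 b0 by auto
  have s': "b \<le> sqrt (1 - e')" "sqrt (1 - e') \<le> 1" using e' e E unfolding b0 by auto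
  have b1: "\<beta>1 > 0" unfolding \<beta>1_def using a b e assms(1-4) by auto
  have sqa: "sqrt ((1 - exp (-2*R)) * (1 - exp (-2*(R+Rc+P)))) = a * sqrt (1 - e')"
    unfolding a_def e'_def by (simp add: real_sqrt_mult)
  have vs_eq: "vs = (sqrt (1 + 4*\<beta>1*(\<sigma>X*a/b)) - 1) / (2*\<beta>1)"
  proof -
    have "1 + 4*\<beta>1*(\<sigma>X*a/b) = (b^2 + 4*a^2*e) / b^2"
      unfolding \<beta>1_def using assms(1-4) b by (simp add: field_simps power2_eq_square)
    hence "sqrt (1 + 4*\<beta>1*(\<sigma>X*a/b)) = sqrt (b^2 + 4*a^2*e) / b"
      using b(1) by (simp add: real_sqrt_divide)
    thus ?thesis unfolding vs_def \<beta>1_def using assms(1) a(1) b(1) e(1) by (simp add: field_simps)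
  qed
  have lo: "\<sigma>X*a/b \<le> \<beta>2"
  proof -
    have eb: "e = 1 - b^2" using b by simp
    have "\<sigma>X*a/b = \<sigma>X*a*b + \<sigma>X*a*e/b" unfolding eb using b(1) by (simp add: field_simps power2_eq_square)
    also have "\<dots> \<le> \<sigma>X*a*sqrt(1-e') + \<sigma>X*a*e/b" using s' assms(1) a(1) by simp
    finally show ?thesis unfolding \<beta>2_def sqa by (simp add: algebra_simps)
  qed
  have hi: "\<beta>2 \<le> \<beta>2'"
  proof -
    have "\<sigma>X*a*sqrt(1-e') \<le> \<sigma>X*a" using s' assms(1) a(1) by simp
    thus ?thesis unfolding \<beta>2_def \<beta>2'_def sqa by (simp add: algebra_simps)
  qed
  have P1: "vs \<le> sig" unfolding vs_eq sig_def by (rule root_mono[OF b1 lo])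
  have P2: "sig \<le> vs'" unfolding sig_def vs'_def by (rule root_mono[OF b1 hi])
  have P3: "vs' < \<sigma>X"
  proof -
    have "\<beta>2' < \<sigma>X + \<beta>1*\<sigma>X^2" unfolding \<beta>2'_def \<beta>1_def
      using assms(1-4) a b e by (simp add: field_simps power2_eq_square)
    hence "(4*\<beta>1)*\<beta>2' < (4*\<beta>1)*(\<sigma>X + \<beta>1*\<sigma>X^2)" using b1
      by (intro mult_strict_left_mono) auto
    hence "1 + 4*\<beta>1*\<beta>2' < (1 + 2*\<beta>1*\<sigma>X)^2"
      by (simp add: power2_eq_square algebra_simps)
    hence "sqrt (1 + 4*\<beta>1*\<beta>2') < sqrt ((1 + 2*\<beta>1*\<sigma>X)^2)" by (rule real_sqrt_less_mono)
    moreover have "sqrt ((1 + 2*\<beta>1*\<sigma>X)^2) = 1 + 2*\<beta>1*\<sigma>X" using b1 assms(1) by simp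
    ultimately have "sqrt (1 + 4*\<beta>1*\<beta>2') < 1 + 2*\<beta>1*\<sigma>X" by simp
    thus ?thesis unfolding vs'_def using b1 by (simp add: field_simps)
  qed
  have P4: "Dlow \<sigma>X R Rc P = \<sigma>X^2 + (sigmaP \<sigma>X P)^2 - 2*\<sigma>X*(sigmaP \<sigma>X P)*xi R Rc
       \<longrightarrow> sigmaP \<sigma>X P \<ge> vs"
  proof
    assume H: "Dlow \<sigma>X R Rc P = \<sigma>X^2 + (sigmaP \<sigma>X P)^2 - 2*\<sigma>X*(sigmaP \<sigma>X P)*xi R Rc"
    define sP where "sP = sigmaP \<sigma>X P"
    have sP: "0 < sP" "sP \<le> \<sigma>X" "psi \<sigma>X sP = P"
      using sigmaP_props[OF assms(1,4)] unfolding sP_def by auto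
    define f where "f = (\<lambda>s. \<sigma>X^2 + s^2 - 2*\<sigma>X*s*sqrt((1-exp(-2*R))*(1-exp(-2*(R+Rc+P-psi \<sigma>X s)))))"
    have Dl: "Dlow \<sigma>X R Rc P = Inf (f ` {sP..\<sigma>X})" unfolding Dlow_def f_def sP_def by (rule refl)
    have fsP: "f sP = Dlow \<sigma>X R Rc P" unfolding H f_def xi_def sP_def[symmetric] using sP(3) by simp
    have bdd: "bdd_below (f ` {sP..\<sigma>X})"
    proof (rule bdd_belowI2)
      fix s assume s: "s \<in> {sP..\<sigma>X}"
      have A: "0 \<le> 1 - exp(-2*R)" "1 - exp(-2*R) < 1" using E unfolding E_def by auto
      have "(1-exp(-2*R))*(1-exp(-2*(R+Rc+P-psi \<sigma>X s))) \<le> (1-exp(-2*R))*1"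
        using A by (intro mult_left_mono) auto
      hence "(1-exp(-2*R))*(1-exp(-2*(R+Rc+P-psi \<sigma>X s))) \<le> 1" using A unfolding mult_1_right by linarith
      hence "sqrt ((1-exp(-2*R))*(1-exp(-2*(R+Rc+P-psi \<sigma>X s)))) \<le> 1" by simp
      hence "2*\<sigma>X*s*sqrt((1-exp(-2*R))*(1-exp(-2*(R+Rc+P-psi \<sigma>X s)))) \<le> 2*\<sigma>X*s*1"
        using s sP assms(1) by (intro mult_left_mono) auto
      moreover have "0 \<le> (\<sigma>X - s)^2" by simp
      ultimately show "0 \<le> f s" unfolding f_def by (simp add: power2_eq_square algebra_simps)
    qed
    show "sP \<ge> vs" unfolding sP_def[symmetric]
    proof (rule ccontr)
      assume "\<not> vs \<le> sP"
      hence lt: "sP < vs" by simp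
      hence lt2: "sP < \<sigma>X" using P1 P2 P3 by simp
      define q where "q = (\<lambda>s. a*e*s^2 + \<sigma>X*b*s - \<sigma>X^2*a)"
      define S where "S = sqrt (b^2 + 4*a^2*e)"
      have "0 \<le> b^2 + 4*a^2*e" using e(1) by (intro add_nonneg_nonneg mult_nonneg_nonneg) auto
      hence S2: "S^2 = b^2 + 4*a^2*e" unfolding S_def by simp
      define w where "w = vs*(2*a*e)"
      have "vs = \<sigma>X*(S-b)/(2*a*e)" unfolding vs_def S_def ..
      hence w: "w = \<sigma>X*(S-b)" unfolding w_def using a(1) e(1) by simp
      have "4*a*e*q vs = w^2 + 2*\<sigma>X*b*w - 4*\<sigma>X^2*a^2*e"
        unfolding q_def w_def by (simp add: algebra_simps power2_eq_square)
      also have "\<dots> = \<sigma>X^2*(S^2 - b^2 - 4*a^2*e)" unfolding w by (simp add: algebra_simps power2_eq_square)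
      also have "\<dots> = 0" using S2 by simp
      finally have qvs: "q vs = 0" using a(1) e(1) by simp
      have "q vs - q sP = (vs - sP)*(a*e*(vs+sP) + \<sigma>X*b)" unfolding q_def by (simp add: algebra_simps power2_eq_square)
      moreover have "(vs - sP)*(a*e*(vs+sP) + \<sigma>X*b) > 0"
        using lt sP(1) a(1) e(1) b(1) assms(1) by (intro mult_pos_pos add_pos_pos) auto
      ultimately have qneg: "q sP < 0" using qvs by simp
      have pos: "0 < (1-E)*(1-e)" using a(1) b(1) by (simp flip: a(3) b(3))
      have d: "DERIV f sP :> 2*sP - 2*\<sigma>X*(sqrt((1-E)*(1-e)) + sP * (-(1-E)*2*e*(-1/sP + sP/\<sigma>X^2)) / (2*sqrt((1-E)*(1-e))))"
        unfolding f_def by (rule deriv_f[OF sP(1) assms(1) sP(3) E_def meta_eq_to_obj_eq[OF e_def] pos])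
      have sq: "sqrt((1-E)*(1-e)) = a*b" using a(1) b(1) by (simp flip: a(3) b(3) add: real_sqrt_mult)
      have Dneg: "2*sP - 2*\<sigma>X*(sqrt((1-E)*(1-e)) + sP * (-(1-E)*2*e*(-1/sP + sP/\<sigma>X^2)) / (2*sqrt((1-E)*(1-e)))) < 0"
      proof -
        have t1: "sP * (-(1-E)*2*e*(-1/sP + sP/\<sigma>X^2)) / (2*(a*b)) = a*e*(\<sigma>X^2 - sP^2)/(\<sigma>X^2*b)"
          unfolding a(3)[symmetric] using a(1) b(1) sP(1) assms(1) by (simp add: field_simps power2_eq_square)
        have t2: "(2*sP - 2*\<sigma>X*(a*b + a*e*(\<sigma>X^2 - sP^2)/(\<sigma>X^2*b))) * (\<sigma>X*b)
              = 2*sP*\<sigma>X*b - 2*\<sigma>X^2*a*b^2 - 2*a*e*(\<sigma>X^2 - sP^2)"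
          using b(1) assms(1) by (simp add: field_simps power2_eq_square)
        have t3: "2*sP*\<sigma>X*b - 2*\<sigma>X^2*a*b^2 - 2*a*e*(\<sigma>X^2 - sP^2) = 2 * q sP"
          unfolding q_def using b(3) by (simp add: algebra_simps power2_eq_square) (simp add: algebra_simps flip: distrib_left)
        have "(2*sP - 2*\<sigma>X*(sqrt((1-E)*(1-e)) + sP * (-(1-E)*2*e*(-1/sP + sP/\<sigma>X^2)) / (2*sqrt((1-E)*(1-e))))) * (\<sigma>X*b)
              = 2 * q sP"
          unfolding sq t1 t2 t3 ..
        hence k: "(2*sP - 2*\<sigma>X*(sqrt((1-E)*(1-e)) + sP * (-(1-E)*2*e*(-1/sP + sP/\<sigma>X^2)) / (2*sqrt((1-E)*(1-e))))) * (\<sigma>X*b) < 0"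
          using qneg by simp
        have cp: "0 < \<sigma>X*b" using b(1) assms(1) by simp
        have gen: "\<And>X::real. X*(\<sigma>X*b) < 0 \<Longrightarrow> X < 0"
        proof (rule ccontr)
          fix X :: real assume X: "X*(\<sigma>X*b) < 0" "\<not> X < 0"
          hence "0 \<le> X*(\<sigma>X*b)" using cp by simp
          thus False using X by simp
        qed
        show ?thesis by (rule gen[OF k])
      qed
      obtain d0 where d0: "d0 > 0" "\<forall>h>0. h < d0 \<longrightarrow> f sP > f (sP + h)"
        using DERIV_neg_dec_right[OF d Dneg] by blast
      define h where "h = min (d0/2) ((\<sigma>X - sP)/2)"
      have h1: "h \<le> (\<sigma>X - sP)/2" "h \<le> d0/2" unfolding h_def by (rule min.cobounded2, rule min.cobounded1)
      have h0: "h > 0" using d0 lt2 unfolding h_def by simp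
      have h: "h > 0" "h < d0" "sP + h \<in> {sP..\<sigma>X}" using h0 h1 d0 lt2 by auto
      have "f (sP + h) < f sP" using d0(2) h(1,2) by blast
      moreover have "Inf (f ` {sP..\<sigma>X}) \<le> f (sP + h)"
        by (rule cInf_lower[OF imageI[OF h(3)] bdd])
      ultimately show False using fsP Dl by linarith
    qed
  qed
  show ?thesis using P1 P2 P3 P4 by blast
qed

end
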